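(* Let $\mathcal X=(\Omega,S)$ be a scheme with $n=|\Omega|$ such that $4c(m-1)<n$, where $c=c(\mathcal X)$ and $m=n_{\max}$. Then for every $\alpha\in\Omega$ the coherent configuration $\mathcal X_\alpha$ is $1$-regular. In particular, $b(\mathcal X)\le 2$.
   Context: A coherent configuration on a finite set $\Omega$ is $(\Omega,S)$ with $S$ a partition of $\Omega\times\Omega$ such that $1_\Omega$ is a union of elements of $S$, $s^*=\{(\beta,\alpha):(\alpha,\beta)\in s\}\in S$, and for $r,s,t\in S$ the number $|\{\gamma:(\alpha,\gamma)\in r,(\gamma,\beta)\in s\}|$ is independent of $(\alpha,\beta)\in t$; it is a scheme if $1_\Omega\in S$. Valency of $r\in S$ in a scheme: $n_r=|\{\beta:(\alpha,\beta)\in r\}|$ (independent of $\alpha$); $n_{\max}=\max_{r\in S}n_r$. For $\alpha,\beta\in\Omega$, $r(\alpha,\beta)$ is the element of $S$ containing $(\alpha,\beta)$. For $s\in S$ and $(\alpha,\beta)\in s$, the indistinguishing number $c(s)=|\{\gamma\in\Omega: r(\alpha,\gamma)=r(\beta,\gamma)\}|$ (independent of the choice of $(\alpha,\beta)$); $c(\mathcal X)$ is the maximum of $c(s)$ over $s\in S$, $s\ne 1_\Omega$. Fibers: sets $\Gamma$ with $1_\Gamma\in S$. Fission: configuration on $\Omega$ whose relations (unions of basic relations) include those of $\mathcal X$; complete: all basic relations singletons. $\mathcal X_\alpha$ is the smallest fission in which $\{\alpha\}$ is a fiber. A coherent configuration $(\Omega,T)$ is $1$-regular if some point $\gamma$ satisfies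 $|\{\delta:(\gamma,\delta)\in t\}|\le1$ for all $t\in T$. A set $B$ is a base if the smallest fission in which all $\{\beta\}$, $\beta\in B$, are fibers is complete; $b(\mathcal X)$ is the minimal size of a base. *)

theory Defs
  imports Main
begin

definition coherent_config :: "'a set \<Rightarrow> ('a \<times> 'a) set set \<Rightarrow> bool" where
  "coherent_config \<Omega> S \<longleftrightarrow>
     finite \<Omega> \<and>
     (\<forall>s\<in>S. s \<noteq> {}) \<and>
     (\<forall>s\<in>S. \<forall>t\<in>S. s \<noteq> t \<longrightarrow> s \<inter> t = {}) \<and>
     \<Union>S = \<Omega> \<times> \<Omega> \<and>
     (\<forall>s\<in>S. s \<subseteq> Id_on \<Omega> \<or> s \<inter> Id_on \<Omega> = {}) \<and>
     (\<forall>s\<in>S. converse s \<in> S) \<and>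
     (\<forall>r\<in>S. \<forall>s\<in>S. \<forall>t\<in>S. \<forall>x\<in>t. \<forall>y\<in>t.
        card {\<gamma>. (fst x, \<gamma>) \<in> r \<and> (\<gamma>, snd x) \<in> s}
      = card {\<gamma>. (fst y, \<gamma>) \<in> r \<and> (\<gamma>, snd y) \<in> s})"

definition scheme :: "'a set \<Rightarrow> ('a \<times> 'a) set set \<Rightarrow> bool" where
  "scheme \<Omega> S \<longleftrightarrow> coherent_config \<Omega> S \<and> Id_on \<Omega> \<in> S"

text \<open>n_max: the maximal valency (in a scheme the valency does not depend on the point).\<close>
definition n_max :: "'a set \<Rightarrow> ('a \<times> 'a) set set \<Rightarrow> nat" where
  "n_max \<Omega> S = Max {card {\<beta>. (\<alpha>, \<beta>) \<in> r} | \<alpha> r. \<alpha> \<in> \<Omega> \<and> r \<in> S}"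

definition indist :: "'a set \<Rightarrow> ('a \<times> 'a) set set \<Rightarrow> 'a \<Rightarrow> 'a \<Rightarrow> nat" where
  "indist \<Omega> S \<alpha> \<beta> = card {\<gamma>\<in>\<Omega>. \<exists>r\<in>S. (\<alpha>, \<gamma>) \<in> r \<and> (\<beta>, \<gamma>) \<in> r}"

definition indist_number :: "'a set \<Rightarrow> ('a \<times> 'a) set set \<Rightarrow> nat" where
  "indist_number \<Omega> S =
     Max {indist \<Omega> S \<alpha> \<beta> | \<alpha> \<beta> s. s \<in> S \<and> s \<noteq> Id_on \<Omega> \<and> (\<alpha>, \<beta>) \<in> s}"

definition fission :: "'a set \<Rightarrow> ('a \<times> 'a) set set \<Rightarrow> ('a \<times> 'a) set set \<Rightarrow> bool" where
  "fission \<Omega> S T \<longleftrightarrow> coherent_config \<Omega> T \<and> (\<forall>s\<in>S. \<exists>U\<subseteq>T. s = \<Union>U)"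

definition smallest_point_fission ::
  "'a set \<Rightarrow> ('a \<times> 'a) set set \<Rightarrow> 'a set \<Rightarrow> ('a \<times> 'a) set set \<Rightarrow> bool" where
  "smallest_point_fission \<Omega> S B T \<longleftrightarrow>
     fission \<Omega> S T \<and> (\<forall>\<beta>\<in>B. {(\<beta>, \<beta>)} \<in> T) \<and>
     (\<forall>T'. fission \<Omega> S T' \<and> (\<forall>\<beta>\<in>B. {(\<beta>, \<beta>)} \<in> T') \<longrightarrow> fission \<Omega> T T')"

definition one_regular :: "'a set \<Rightarrow> ('a \<times> 'a) set set \<Rightarrow> bool" where
  "one_regular \<Omega> T \<longleftrightarrow> (\<exists>\<gamma>\<in>\<Omega>. \<forall>t\<in>T. card {\<delta>. (\<gamma>, \<delta>) \<in> t} \<le> 1)"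

definition complete_config :: "('a \<times> 'a) set set \<Rightarrow> bool" where
  "complete_config T \<longleftrightarrow> (\<forall>t\<in>T. card t = 1)"

definition is_base :: "'a set \<Rightarrow> ('a \<times> 'a) set set \<Rightarrow> 'a set \<Rightarrow> bool" where
  "is_base \<Omega> S B \<longleftrightarrow> B \<subseteq> \<Omega> \<and>
     (\<exists>T. smallest_point_fission \<Omega> S B T \<and> complete_config T)"

definition base_number :: "'a set \<Rightarrow> ('a \<times> 'a) set set \<Rightarrow> nat" where
  "base_number \<Omega> S = (LEAST k. \<exists>B. is_base \<Omega> S B \<and> card B = k)"

end

theory Submission
  imports Defs
begin


lemma cc_fin: "coherent_config \<Omega> T \<Longrightarrow> finite \<Omega>"
  by (simp add: coherent_config_def)

lemma cc_parts:
  assumes "coherent_config \<Omega> T"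
  shows "\<forall>s\<in>T. s \<noteq> {}" "\<forall>s\<in>T. \<forall>t\<in>T. s \<noteq> t \<longrightarrow> s \<inter> t = {}" "\<Union>T = \<Omega> \<times> \<Omega>"
    "\<forall>s\<in>T. s \<subseteq> Id_on \<Omega> \<or> s \<inter> Id_on \<Omega> = {}" "\<forall>s\<in>T. converse s \<in> T"
  using assms unfolding coherent_config_def by simp_all

lemma cc_sub: "coherent_config \<Omega> T \<Longrightarrow> t \<in> T \<Longrightarrow> t \<subseteq> \<Omega> \<times> \<Omega>"
  using cc_parts(3) by blast

lemma cc_disj: "coherent_config \<Omega> T \<Longrightarrow> t \<in> T \<Longrightarrow> t' \<in> T \<Longrightarrow> p \<in> t \<Longrightarrow> p \<in> t' \<Longrightarrow> t = t'"
  using cc_parts(2) by blast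

lemma cc_cover: "coherent_config \<Omega> T \<Longrightarrow> p \<in> \<Omega> \<times> \<Omega> \<Longrightarrow> \<exists>t\<in>T. p \<in> t"
  using cc_parts(3) by blast

lemma cc_conv: "coherent_config \<Omega> T \<Longrightarrow> t \<in> T \<Longrightarrow> converse t \<in> T"
  using cc_parts(5) by blast

lemma cc_inter: "coherent_config \<Omega> T \<Longrightarrow> r \<in> T \<Longrightarrow> s \<in> T \<Longrightarrow> t \<in> T \<Longrightarrow> (a,b) \<in> t \<Longrightarrow> (a',b') \<in> t \<Longrightarrow>
   card {g. (a, g) \<in> r \<and> (g, b) \<in> s} = card {g. (a', g) \<in> r \<and> (g, b') \<in> s}"
proof -
  assume c: "coherent_config \<Omega> T" and rst: "r \<in> T" "s \<in> T" "t \<in> T" and x: "(a,b) \<in> t" "(a',b') \<in> t"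
  have h: "\<forall>r\<in>T. \<forall>s\<in>T. \<forall>t\<in>T. \<forall>x\<in>t. \<forall>y\<in>t.
        card {\<gamma>. (fst x, \<gamma>) \<in> r \<and> (\<gamma>, snd x) \<in> s}
      = card {\<gamma>. (fst y, \<gamma>) \<in> r \<and> (\<gamma>, snd y) \<in> s}" using c unfolding coherent_config_def by blast
  have "card {\<gamma>. (fst (a,b), \<gamma>) \<in> r \<and> (\<gamma>, snd (a,b)) \<in> s}
      = card {\<gamma>. (fst (a',b'), \<gamma>) \<in> r \<and> (\<gamma>, snd (a',b')) \<in> s}"
    by (rule h[rule_format, OF rst(1) rst(2) rst(3) x(1) x(2)])
  thus ?thesis by simp
qed

lemma cc_finT: "coherent_config \<Omega> T \<Longrightarrow> finite T"
proof -
  assume c: "coherent_config \<Omega> T"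
  have "T \<subseteq> Pow (\<Omega> \<times> \<Omega>)" using cc_sub[OF c] by blast
  moreover have "finite (Pow (\<Omega> \<times> \<Omega>))" using cc_fin[OF c] by simp
  ultimately show ?thesis by (rule finite_subset)
qed

lemma fiber_row:
  assumes c: "coherent_config \<Omega> T" and f: "{(\<beta>,\<beta>)} \<in> T" and w: "w \<in> T"
    and p: "(\<beta>,x) \<in> w" and q: "(a,b) \<in> w"
  shows "a = \<beta>"
proof (rule ccontr)
  assume ne: "a \<noteq> \<beta>"
  have e0: "card {g. (\<beta>, g) \<in> {(\<beta>,\<beta>)} \<and> (g, x) \<in> w} = card {g. (a, g) \<in> {(\<beta>,\<beta>)} \<and> (g, b) \<in> w}"
    by (rule cc_inter[OF c f w w p q])
  have e1: "{g. (\<beta>, g) \<in> {(\<beta>,\<beta>)} \<and> (g, x) \<in> w} = {\<beta>}" using p by auto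
  have e2: "{g. (a, g) \<in> {(\<beta>,\<beta>)} \<and> (g, b) \<in> w} = {}" using ne by auto
  from e0 have "card {\<beta>} = card ({}::'a set)" by (simp only: e1 e2)
  thus False by simp
qed

lemma refine:
  assumes f: "fission \<Omega> S T" and cS: "coherent_config \<Omega> S"
    and t: "t \<in> T" and pt: "p \<in> t" and s: "s \<in> S" and ps: "p \<in> s"
  shows "t \<subseteq> s"
proof -
  have cT: "coherent_config \<Omega> T" using f by (simp add: fission_def)
  obtain U where U: "U \<subseteq> T" "s = \<Union>U" using f s unfolding fission_def by blast
  then obtain u where u: "u \<in> U" "p \<in> u" using ps by blast
  have uT: "u \<in> T" using u U by blast
  have "u = t" by (rule cc_disj[OF cT uT t u(2) pt])
  thus ?thesis using U u by blast
qed



lemma fin_indist_set: "finite \<Omega> \<Longrightarrow> finite {indist \<Omega> S \<alpha> \<beta> | \<alpha> \<beta> s. s \<in> S \<and> s \<noteq> Id_on \<Omega> \<and> (\<alpha>, \<beta>) \<in> s}"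
proof -
  assume f: "finite \<Omega>"
  have "{indist \<Omega> S \<alpha> \<beta> | \<alpha> \<beta> s. s \<in> S \<and> s \<noteq> Id_on \<Omega> \<and> (\<alpha>, \<beta>) \<in> s} \<subseteq> {..card \<Omega>}"
  proof
    fix k assume "k \<in> {indist \<Omega> S \<alpha> \<beta> | \<alpha> \<beta> s. s \<in> S \<and> s \<noteq> Id_on \<Omega> \<and> (\<alpha>, \<beta>) \<in> s}"
    then obtain a b where k: "k = indist \<Omega> S a b" by blast
    have "indist \<Omega> S a b \<le> card \<Omega>" unfolding indist_def
      by (rule card_mono[OF f]) blast
    thus "k \<in> {..card \<Omega>}" using k by simp
  qed
  thus ?thesis by (rule finite_subset) simp
qed

lemma F1:
  assumes sch: "scheme \<Omega> S" and fis: "fission \<Omega> S T"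
    and d: "d \<in> \<Omega>" "d' \<in> \<Omega>" "d \<noteq> d'"
  shows "card {g\<in>\<Omega>. \<exists>t\<in>T. (g,d)\<in>t \<and> (g,d')\<in>t} \<le> indist_number \<Omega> S"
proof -
  have cS: "coherent_config \<Omega> S" and idS: "Id_on \<Omega> \<in> S" using sch by (auto simp: scheme_def)
  have fin: "finite \<Omega>" using cc_fin[OF cS] .
  have sub: "{g\<in>\<Omega>. \<exists>t\<in>T. (g,d)\<in>t \<and> (g,d')\<in>t} \<subseteq> {g\<in>\<Omega>. \<exists>r\<in>S. (d, g) \<in> r \<and> (d', g) \<in> r}"
  proof
    fix g assume "g \<in> {g\<in>\<Omega>. \<exists>t\<in>T. (g,d)\<in>t \<and> (g,d')\<in>t}"
    then obtain t where g: "g \<in> \<Omega>" and t: "t \<in> T" "(g,d)\<in>t" "(g,d')\<in>t" by blast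
    obtain s where s: "s \<in> S" "(g,d) \<in> s" using cc_cover[OF cS, of "(g,d)"] g d by blast
    have "t \<subseteq> s" by (rule refine[OF fis cS t(1) t(2) s])
    hence "(g,d') \<in> s" using t by blast
    moreover have "converse s \<in> S" using cc_conv[OF cS s(1)] .
    ultimately show "g \<in> {g\<in>\<Omega>. \<exists>r\<in>S. (d, g) \<in> r \<and> (d', g) \<in> r}" using g s by blast
  qed
  have "card {g\<in>\<Omega>. \<exists>t\<in>T. (g,d)\<in>t \<and> (g,d')\<in>t} \<le> indist \<Omega> S d d'"
    unfolding indist_def by (rule card_mono) (use fin sub in auto)
  also have "\<dots> \<le> indist_number \<Omega> S"
  proof -
    obtain s0 where s0: "s0 \<in> S" "(d,d') \<in> s0" using cc_cover[OF cS, of "(d,d')"] d by blast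
    have "s0 \<noteq> Id_on \<Omega>" using s0 d(3) by auto
    hence "indist \<Omega> S d d' \<in> {indist \<Omega> S \<alpha> \<beta> | \<alpha> \<beta> s. s \<in> S \<and> s \<noteq> Id_on \<Omega> \<and> (\<alpha>, \<beta>) \<in> s}"
      using s0 by blast
    thus ?thesis unfolding indist_number_def by (rule Max_ge[OF fin_indist_set[OF fin]])
  qed
  finally show ?thesis .
qed

lemma F2:
  assumes cS: "coherent_config \<Omega> S" and fis: "fission \<Omega> S T" and fib: "{(\<alpha>,\<alpha>)} \<in> T"
    and a: "\<alpha> \<in> \<Omega>" and g: "g \<in> \<Omega>"
    and t: "t \<in> T" "(g,d) \<in> t" "(g,d') \<in> t"
  shows "\<exists>s\<in>S. (\<alpha>,d) \<in> s \<and> (\<alpha>,d') \<in> s"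
proof -
  have cT: "coherent_config \<Omega> T" using fis by (simp add: fission_def)
  have d: "d \<in> \<Omega>" "d' \<in> \<Omega>" using cc_sub[OF cT t(1)] t by auto
  obtain w where w: "w \<in> T" "(\<alpha>,d) \<in> w" using cc_cover[OF cT, of "(\<alpha>,d)"] a d by blast
  obtain r1 where r1: "r1 \<in> T" "(g,\<alpha>) \<in> r1" using cc_cover[OF cT, of "(g,\<alpha>)"] a g by blast
  have e0: "card {e. (g,e) \<in> r1 \<and> (e,d) \<in> w} = card {e. (g,e) \<in> r1 \<and> (e,d') \<in> w}"
    by (rule cc_inter[OF cT r1(1) w(1) t(1) t(2) t(3)])
  have "{e. (g,e) \<in> r1 \<and> (e,d) \<in> w} = {\<alpha>}"
    using fiber_row[OF cT fib w(1) w(2)] r1 w by blast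
  hence "card {e. (g,e) \<in> r1 \<and> (e,d') \<in> w} = 1" using e0 by simp
  then obtain e where e: "(g,e) \<in> r1" "(e,d') \<in> w"
    by (metis (no_types, lifting) card.empty empty_Collect_eq zero_neq_one)
  have "e = \<alpha>" by (rule fiber_row[OF cT fib w(1) w(2) e(2)])
  hence w2: "(\<alpha>,d') \<in> w" using e by simp
  obtain s where s: "s \<in> S" "(\<alpha>,d) \<in> s" using cc_cover[OF cS, of "(\<alpha>,d)"] a d by blast
  have "w \<subseteq> s" by (rule refine[OF fis cS w(1) w(2) s])
  thus ?thesis using s w2 by blast
qed

lemma F3:
  assumes cT: "coherent_config \<Omega> T" and g: "g \<in> \<Omega>" and d: "d \<in> \<Omega>"
    and t: "t \<in> T" "(g,x) \<in> t" "(g,x') \<in> t"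
    and single: "\<And>d'. \<exists>s\<in>T. (g,d) \<in> s \<and> (g,d') \<in> s \<Longrightarrow> d' = d"
  shows "\<exists>v\<in>T. (d,x) \<in> v \<and> (d,x') \<in> v"
proof -
  have x: "x \<in> \<Omega>" "x' \<in> \<Omega>" using cc_sub[OF cT t(1)] t by auto
  obtain s where s: "s \<in> T" "(g,d) \<in> s" using cc_cover[OF cT, of "(g,d)"] g d by blast
  obtain v where v: "v \<in> T" "(d,x) \<in> v" using cc_cover[OF cT, of "(d,x)"] x d by blast
  have e0: "card {e. (g,e) \<in> s \<and> (e,x) \<in> v} = card {e. (g,e) \<in> s \<and> (e,x') \<in> v}"
    by (rule cc_inter[OF cT s(1) v(1) t(1) t(2) t(3)])
  have "{e. (g,e) \<in> s \<and> (e,x) \<in> v} = {d}"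
    using single s v by blast
  hence "card {e. (g,e) \<in> s \<and> (e,x') \<in> v} = 1" using e0 by simp
  then obtain e where e: "(g,e) \<in> s" "(e,x') \<in> v"
    by (metis (no_types, lifting) card.empty empty_Collect_eq zero_neq_one)
  have "e = d" using single s e by blast
  thus ?thesis using v e by blast
qed



lemma nmax_ge:
  assumes cS: "coherent_config \<Omega> S" and a: "\<alpha> \<in> \<Omega>" and s: "s \<in> S"
  shows "card {\<beta>. (\<alpha>, \<beta>) \<in> s} \<le> n_max \<Omega> S"
proof -
  have fin: "finite \<Omega>" using cc_fin[OF cS] .
  have "{card {\<beta>. (\<alpha>, \<beta>) \<in> r} | \<alpha> r. \<alpha> \<in> \<Omega> \<and> r \<in> S} \<subseteq> {..card \<Omega>}"
  proof
    fix k assume "k \<in> {card {\<beta>. (\<alpha>, \<beta>) \<in> r} | \<alpha> r. \<alpha> \<in> \<Omega> \<and> r \<in> S}"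
    then obtain a r where k: "k = card {\<beta>. (a, \<beta>) \<in> r}" and r: "r \<in> S" by blast
    have "card {\<beta>. (a, \<beta>) \<in> r} \<le> card \<Omega>"
      by (rule card_mono[OF fin]) (use cc_sub[OF cS r] in blast)
    thus "k \<in> {..card \<Omega>}" using k by simp
  qed
  hence "finite {card {\<beta>. (\<alpha>, \<beta>) \<in> r} | \<alpha> r. \<alpha> \<in> \<Omega> \<and> r \<in> S}" by (rule finite_subset) simp
  moreover have "card {\<beta>. (\<alpha>, \<beta>) \<in> s} \<in> {card {\<beta>. (\<alpha>, \<beta>) \<in> r} | \<alpha> r. \<alpha> \<in> \<Omega> \<and> r \<in> S}"
    using a s by blast
  ultimately show ?thesis unfolding n_max_def by (rule Max_ge)
qed

lemma good_point:
  assumes sch: "scheme \<Omega> S" and fis: "fission \<Omega> S T" and fib: "{(\<alpha>,\<alpha>)} \<in> T"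
    and a: "\<alpha> \<in> \<Omega>"
    and hyp: "4 * indist_number \<Omega> S * (n_max \<Omega> S - 1) < card \<Omega>"
  shows "\<exists>g\<in>\<Omega>. \<forall>t\<in>T. card {d. (g,d) \<in> t} \<le> 1"
proof (rule ccontr)
  assume nog: "\<not> (\<exists>g\<in>\<Omega>. \<forall>t\<in>T. card {d. (g,d) \<in> t} \<le> 1)"
  have cS: "coherent_config \<Omega> S" using sch by (simp add: scheme_def)
  have cT: "coherent_config \<Omega> T" using fis by (simp add: fission_def)
  have fin: "finite \<Omega>" using cc_fin[OF cS] .
  define c where "c = indist_number \<Omega> S"
  define m where "m = n_max \<Omega> S"
  define n where "n = card \<Omega>"
  define sm where "sm = (\<lambda>g d d'. \<exists>t\<in>T. (g,d)\<in>t \<and> (g,d')\<in>t)"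
  define D where "D = (\<lambda>g. {(d,d'). d \<in> \<Omega> \<and> d' \<in> \<Omega> \<and> d \<noteq> d' \<and> sm g d d'})"
  define P where "P = {(d,d'). d \<in> \<Omega> \<and> d' \<in> \<Omega> \<and> d \<noteq> d' \<and> (\<exists>s\<in>S. (\<alpha>,d) \<in> s \<and> (\<alpha>,d') \<in> s)}"
  define G where "G = (\<lambda>p. {g\<in>\<Omega>. sm g (fst p) (snd p)})"
  have npos: "n > 0" unfolding n_def using fin a card_gt_0_iff by blast
  have finD: "\<And>g. finite (D g)"
    by (rule finite_subset[of _ "\<Omega> \<times> \<Omega>"]) (auto simp: D_def fin)
  have finP: "finite P"
    by (rule finite_subset[of _ "\<Omega> \<times> \<Omega>"]) (auto simp: P_def fin)
  have finG: "\<And>p. finite (G p)" by (simp add: G_def fin)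
  have up1: "card (Sigma \<Omega> D) \<le> card (Sigma P G)"
  proof -
    have "(\<lambda>(g,p). (p,g)) ` Sigma \<Omega> D \<subseteq> Sigma P G"
    proof
      fix z assume "z \<in> (\<lambda>(g,p). (p,g)) ` Sigma \<Omega> D"
      then obtain g d d' where z: "z = ((d,d'),g)" and g: "g \<in> \<Omega>" and dd: "(d,d') \<in> D g" by auto
      from dd have dd': "d \<in> \<Omega>" "d' \<in> \<Omega>" "d \<noteq> d'" "sm g d d'" by (auto simp: D_def)
      then obtain t where t: "t \<in> T" "(g,d) \<in> t" "(g,d') \<in> t" by (auto simp: sm_def)
      have "\<exists>s\<in>S. (\<alpha>,d) \<in> s \<and> (\<alpha>,d') \<in> s" by (rule F2[OF cS fis fib a g t])
      thus "z \<in> Sigma P G" using z g dd' by (auto simp: P_def G_def)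
    qed
    moreover have "inj_on (\<lambda>(g,p). (p,g)) (Sigma \<Omega> D)" by (auto simp: inj_on_def)
    moreover have "finite (Sigma P G)" using finP finG by auto
    ultimately show ?thesis by (metis card_image card_mono)
  qed
  have up2: "card (Sigma P G) \<le> card P * c"
  proof -
    have "card (Sigma P G) = (\<Sum>p\<in>P. card (G p))" using finP finG by simp
    also have "\<dots> \<le> of_nat (card P) * c"
    proof (rule sum_bounded_above)
      fix p assume "p \<in> P"
      then obtain d d' where p: "p = (d,d')" "d \<in> \<Omega>" "d' \<in> \<Omega>" "d \<noteq> d'" by (auto simp: P_def)
      have "card {g\<in>\<Omega>. \<exists>t\<in>T. (g,d)\<in>t \<and> (g,d')\<in>t} \<le> indist_number \<Omega> S"
        by (rule F1[OF sch fis p(2) p(3) p(4)])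
      thus "card (G p) \<le> c" by (simp add: G_def sm_def c_def p(1))
    qed
    finally show ?thesis by simp
  qed
  have up3: "card P \<le> n * (m - 1)"
  proof -
    define Q where "Q = (\<lambda>d. {d'. d' \<in> \<Omega> \<and> d \<noteq> d' \<and> (\<exists>s\<in>S. (\<alpha>,d) \<in> s \<and> (\<alpha>,d') \<in> s)})"
    have "P = Sigma \<Omega> Q" by (auto simp: P_def Q_def)
    moreover have finQ: "\<And>d. finite (Q d)" by (simp add: Q_def fin)
    ultimately have "card P = (\<Sum>d\<in>\<Omega>. card (Q d))" using fin by simp
    also have "\<dots> \<le> of_nat (card \<Omega>) * (m - 1)"
    proof (rule sum_bounded_above)
      fix d assume d: "d \<in> \<Omega>"
      obtain s0 where s0: "s0 \<in> S" "(\<alpha>,d) \<in> s0" using cc_cover[OF cS, of "(\<alpha>,d)"] a d by blast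
      have "Q d = {d'. (\<alpha>,d') \<in> s0} - {d}"
      proof
        show "Q d \<subseteq> {d'. (\<alpha>,d') \<in> s0} - {d}"
        proof
          fix d' assume "d' \<in> Q d"
          then obtain s where s: "s \<in> S" "(\<alpha>,d) \<in> s" "(\<alpha>,d') \<in> s" and "d \<noteq> d'" by (auto simp: Q_def)
          have "s = s0" by (rule cc_disj[OF cS s(1) s0(1) s(2) s0(2)])
          thus "d' \<in> {d'. (\<alpha>,d') \<in> s0} - {d}" using s \<open>d \<noteq> d'\<close> by auto
        qed
        show "{d'. (\<alpha>,d') \<in> s0} - {d} \<subseteq> Q d"
          using s0 cc_sub[OF cS s0(1)] by (auto simp: Q_def)
      qed
      moreover have "finite {d'. (\<alpha>,d') \<in> s0}"
        by (rule finite_subset[of _ \<Omega>]) (use cc_sub[OF cS s0(1)] fin in auto)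
      moreover have "card {d'. (\<alpha>,d') \<in> s0} \<le> m" unfolding m_def by (rule nmax_ge[OF cS a s0(1)])
      ultimately show "card (Q d) \<le> m - 1" using s0(2) by simp
    qed
    finally show ?thesis by (simp add: n_def)
  qed
  have upper: "card (Sigma \<Omega> D) \<le> n * (c * (m - 1))"
  proof -
    have "card P * c \<le> n * (m - 1) * c" using up3 by simp
    thus ?thesis using up1 up2 by (simp add: algebra_simps)
  qed
  have low: "\<And>g. g \<in> \<Omega> \<Longrightarrow> 2 \<le> card (D g) \<and> n - c \<le> card (D g)"
  proof -
    fix g assume g: "g \<in> \<Omega>"
    obtain t where t: "t \<in> T" and ct: "\<not> card {d. (g,d) \<in> t} \<le> 1" using nog g by blast
    have "finite {d. (g,d) \<in> t}" by (rule finite_subset[of _ \<Omega>]) (use cc_sub[OF cT t] fin in auto)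
    then obtain x x' where xx: "(g,x) \<in> t" "(g,x') \<in> t" "x \<noteq> x'"
      using ct card_le_Suc0_iff_eq by (metis (no_types, lifting) One_nat_def mem_Collect_eq)
    have x: "x \<in> \<Omega>" "x' \<in> \<Omega>" using cc_sub[OF cT t] xx by auto
    have two: "{(x,x'),(x',x)} \<subseteq> D g" using xx x t by (auto simp: D_def sm_def)
    have "card {(x,x'),(x',x)} = 2" using xx(3) by simp
    hence c2: "2 \<le> card (D g)" using card_mono[OF finD two] by simp
    have cov: "\<Omega> \<subseteq> fst ` D g \<union> {d\<in>\<Omega>. \<exists>t\<in>T. (d,x)\<in>t \<and> (d,x')\<in>t}"
    proof
      fix d assume d: "d \<in> \<Omega>"
      show "d \<in> fst ` D g \<union> {d\<in>\<Omega>. \<exists>t\<in>T. (d,x)\<in>t \<and> (d,x')\<in>t}"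
      proof (cases "d \<in> fst ` D g")
        case True thus ?thesis by blast
      next
        case False
        have single: "\<And>d'. \<exists>s\<in>T. (g,d) \<in> s \<and> (g,d') \<in> s \<Longrightarrow> d' = d"
        proof (rule ccontr)
          fix d' assume s: "\<exists>s\<in>T. (g,d) \<in> s \<and> (g,d') \<in> s" and ne: "d' \<noteq> d"
          then obtain s where s: "s \<in> T" "(g,d) \<in> s" "(g,d') \<in> s" by blast
          have "d' \<in> \<Omega>" using cc_sub[OF cT s(1)] s by auto
          hence "(d,d') \<in> D g" using d ne s by (auto simp: D_def sm_def)
          hence "d \<in> fst ` D g" by force
          thus False using False by blast
        qed
        have "\<exists>v\<in>T. (d,x) \<in> v \<and> (d,x') \<in> v" by (rule F3[OF cT g d t xx(1) xx(2) single])
        thus ?thesis using d by blast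
      qed
    qed
    have "n \<le> card (fst ` D g \<union> {d\<in>\<Omega>. \<exists>t\<in>T. (d,x)\<in>t \<and> (d,x')\<in>t})"
      unfolding n_def by (rule card_mono) (use finD fin cov in auto)
    also have "\<dots> \<le> card (fst ` D g) + card {d\<in>\<Omega>. \<exists>t\<in>T. (d,x)\<in>t \<and> (d,x')\<in>t}" by (rule card_Un_le)
    also have "\<dots> \<le> card (D g) + c"
      using card_image_le[OF finD, of fst g] F1[OF sch fis x xx(3)] by (simp add: c_def)
    finally show "2 \<le> card (D g) \<and> n - c \<le> card (D g)" using c2 by simp
  qed
  have sumD: "card (Sigma \<Omega> D) = (\<Sum>g\<in>\<Omega>. card (D g))" using fin finD by simp
  have l1: "n * 2 \<le> card (Sigma \<Omega> D)"
  proof -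
    have "(\<Sum>g\<in>\<Omega>. 2) \<le> (\<Sum>g\<in>\<Omega>. card (D g))" by (rule sum_mono) (use low in blast)
    thus ?thesis using sumD by (simp add: n_def)
  qed
  have l2: "n * (n - c) \<le> card (Sigma \<Omega> D)"
  proof -
    have "(\<Sum>g\<in>\<Omega>. n - c) \<le> (\<Sum>g\<in>\<Omega>. card (D g))" by (rule sum_mono) (use low in blast)
    thus ?thesis using sumD by (simp add: n_def)
  qed
  define K where "K = c * (m - 1)"
  have "n * 2 \<le> n * K" using l1 upper unfolding K_def by linarith
  hence k1: "2 \<le> K" using npos by simp
  have "m - 1 \<noteq> 0" using k1 unfolding K_def by (cases "m - 1") auto
  hence ck: "c \<le> K" unfolding K_def by (simp add: Suc_le_eq)
  have "n * (n - c) \<le> n * K" using l2 upper unfolding K_def by linarith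
  hence k2: "n - c \<le> K" using npos by simp
  have "4 * K < n" using hyp unfolding K_def c_def m_def n_def by (simp add: mult.assoc)
  thus False using k2 ck by linarith
qed



lemma cc_union_count:
  assumes cT: "coherent_config \<Omega> T" and Ur: "Ur \<subseteq> T" and Us: "Us \<subseteq> T"
  shows "card {g. (a,g) \<in> \<Union>Ur \<and> (g,b) \<in> \<Union>Us} = (\<Sum>uv\<in>Ur \<times> Us. card {g. (a,g) \<in> fst uv \<and> (g,b) \<in> snd uv})"
proof -
  have fin: "finite \<Omega>" using cc_fin[OF cT] .
  have fT: "finite T" using cc_finT[OF cT] .
  have fI: "finite (Ur \<times> Us)" using finite_subset[OF Ur fT] finite_subset[OF Us fT] by simp
  have eq: "{g. (a,g) \<in> \<Union>Ur \<and> (g,b) \<in> \<Union>Us} = \<Union>((\<lambda>uv. {g. (a,g) \<in> fst uv \<and> (g,b) \<in> snd uv}) ` (Ur \<times> Us))"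
    by auto
  have "card (\<Union>((\<lambda>uv. {g. (a,g) \<in> fst uv \<and> (g,b) \<in> snd uv}) ` (Ur \<times> Us))) = (\<Sum>uv\<in>Ur \<times> Us. card {g. (a,g) \<in> fst uv \<and> (g,b) \<in> snd uv})"
  proof (rule card_UN_disjoint[OF fI])
    show "\<forall>i\<in>Ur \<times> Us. finite {g. (a, g) \<in> fst i \<and> (g, b) \<in> snd i}"
    proof
      fix i assume i: "i \<in> Ur \<times> Us"
      hence "fst i \<in> T" using Ur by auto
      hence "{g. (a, g) \<in> fst i \<and> (g, b) \<in> snd i} \<subseteq> \<Omega>" using cc_sub[OF cT] by blast
      thus "finite {g. (a, g) \<in> fst i \<and> (g, b) \<in> snd i}" using fin finite_subset by blast
    qed
    show "\<forall>i\<in>Ur \<times> Us. \<forall>j\<in>Ur \<times> Us. i \<noteq> j \<longrightarrow>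
        {g. (a, g) \<in> fst i \<and> (g, b) \<in> snd i} \<inter> {g. (a, g) \<in> fst j \<and> (g, b) \<in> snd j} = {}"
    proof (intro ballI impI)
      fix i j assume i: "i \<in> Ur \<times> Us" and j: "j \<in> Ur \<times> Us" and ne: "i \<noteq> j"
      show "{g. (a, g) \<in> fst i \<and> (g, b) \<in> snd i} \<inter> {g. (a, g) \<in> fst j \<and> (g, b) \<in> snd j} = {}"
      proof (rule ccontr)
        assume "{g. (a, g) \<in> fst i \<and> (g, b) \<in> snd i} \<inter> {g. (a, g) \<in> fst j \<and> (g, b) \<in> snd j} \<noteq> {}"
        then obtain g where g: "(a, g) \<in> fst i" "(g, b) \<in> snd i" "(a, g) \<in> fst j" "(g, b) \<in> snd j" by blast
        have T: "fst i \<in> T" "snd i \<in> T" "fst j \<in> T" "snd j \<in> T" using i j Ur Us by auto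
        have "fst i = fst j" by (rule cc_disj[OF cT T(1) T(3) g(1) g(3)])
        moreover have "snd i = snd j" by (rule cc_disj[OF cT T(2) T(4) g(2) g(4)])
        ultimately show False using ne by (simp add: prod_eq_iff)
      qed
    qed
  qed
  thus ?thesis using eq by simp
qed

lemma cc_union_inter:
  assumes cT: "coherent_config \<Omega> T" and Ur: "Ur \<subseteq> T" and Us: "Us \<subseteq> T"
    and t: "t \<in> T" "(a,b) \<in> t" "(a',b') \<in> t"
  shows "card {g. (a,g) \<in> \<Union>Ur \<and> (g,b) \<in> \<Union>Us} = card {g. (a',g) \<in> \<Union>Ur \<and> (g,b') \<in> \<Union>Us}"
proof -
  have "(\<Sum>uv\<in>Ur \<times> Us. card {g. (a,g) \<in> fst uv \<and> (g,b) \<in> snd uv}) = (\<Sum>uv\<in>Ur \<times> Us. card {g. (a',g) \<in> fst uv \<and> (g,b') \<in> snd uv})"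
  proof (rule sum.cong[OF refl])
    fix uv assume "uv \<in> Ur \<times> Us"
    hence "fst uv \<in> T" "snd uv \<in> T" using Ur Us by auto
    thus "card {g. (a,g) \<in> fst uv \<and> (g,b) \<in> snd uv} = card {g. (a',g) \<in> fst uv \<and> (g,b') \<in> snd uv}"
      using cc_inter[OF cT _ _ t] by blast
  qed
  thus ?thesis using cc_union_count[OF cT Ur Us, of a b] cc_union_count[OF cT Ur Us, of a' b'] by simp
qed

definition samb :: "('a \<times> 'a) set set \<Rightarrow> ('a \<times> 'a) \<Rightarrow> ('a \<times> 'a) \<Rightarrow> bool" where
  "samb T p q \<longleftrightarrow> (\<exists>t\<in>T. p \<in> t \<and> q \<in> t)"

definition jrel :: "('a \<times> 'a) set set \<Rightarrow> ('a \<times> 'a) set set \<Rightarrow> (('a \<times> 'a) \<times> ('a \<times> 'a)) set" where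
  "jrel T1 T2 = {(p,q). samb T1 p q \<or> samb T2 p q}"

definition join :: "'a set \<Rightarrow> ('a \<times> 'a) set set \<Rightarrow> ('a \<times> 'a) set set \<Rightarrow> ('a \<times> 'a) set set" where
  "join \<Omega> T1 T2 = {(jrel T1 T2)\<^sup>* `` {p} | p. p \<in> \<Omega> \<times> \<Omega>}"

lemma jrel_inv:
  assumes "(p,q) \<in> (jrel T1 T2)\<^sup>*"
    and "\<And>p q. samb T1 p q \<Longrightarrow> f p = f q" and "\<And>p q. samb T2 p q \<Longrightarrow> f p = f q"
  shows "f p = f q"
  using assms(1)
proof (induction rule: rtrancl_induct)
  case base thus ?case by simp
next
  case (step y z)
  hence "samb T1 y z \<or> samb T2 y z" by (simp add: jrel_def)
  thus ?case using step assms(2,3) by metis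
qed

lemma jrel_sym: "sym ((jrel T1 T2)\<^sup>*)"
proof (rule sym_rtrancl)
  show "sym (jrel T1 T2)" unfolding sym_def jrel_def samb_def by blast
qed

lemma jrel_trans: "trans ((jrel T1 T2)\<^sup>*)" by (rule trans_rtrancl)

lemma class_eq:
  assumes "q \<in> (jrel T1 T2)\<^sup>* `` {p}"
  shows "(jrel T1 T2)\<^sup>* `` {q} = (jrel T1 T2)\<^sup>* `` {p}"
proof -
  have pq: "(p,q) \<in> (jrel T1 T2)\<^sup>*" using assms by simp
  hence qp: "(q,p) \<in> (jrel T1 T2)\<^sup>*" using jrel_sym[of T1 T2] unfolding sym_def by blast
  show ?thesis using pq qp rtrancl_trans[of _ _ "jrel T1 T2"] by blast
qed

lemma jrel_swap:
  assumes c1: "coherent_config \<Omega> T1" and c2: "coherent_config \<Omega> T2"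
    and "(p,q) \<in> (jrel T1 T2)\<^sup>*"
  shows "(prod.swap p, prod.swap q) \<in> (jrel T1 T2)\<^sup>*"
  using assms(3)
proof (induction rule: rtrancl_induct)
  case base thus ?case by simp
next
  case (step y z)
  have sw: "\<And>T. coherent_config \<Omega> T \<Longrightarrow> samb T y z \<Longrightarrow> samb T (prod.swap y) (prod.swap z)"
  proof -
    fix T assume cT: "coherent_config \<Omega> T" and "samb T y z"
    then obtain t where t: "t \<in> T" "y \<in> t" "z \<in> t" by (auto simp: samb_def)
    have "converse t \<in> T" by (rule cc_conv[OF cT t(1)])
    moreover have "prod.swap y \<in> converse t" "prod.swap z \<in> converse t" using t
      by (cases y, cases z, auto)+
    ultimately show "samb T (prod.swap y) (prod.swap z)" unfolding samb_def by (intro bexI[of _ "converse t"] conjI)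
  qed
  have "samb T1 y z \<or> samb T2 y z" using step(2) by (simp add: jrel_def)
  hence "(prod.swap y, prod.swap z) \<in> jrel T1 T2" using sw[OF c1] sw[OF c2] by (auto simp: jrel_def)
  with step(3) show ?case by (rule rtrancl_into_rtrancl)
qed

lemma jrel_in:
  assumes c1: "coherent_config \<Omega> T1" and c2: "coherent_config \<Omega> T2"
    and "(p,q) \<in> (jrel T1 T2)\<^sup>*" and "p \<in> \<Omega> \<times> \<Omega>"
  shows "q \<in> \<Omega> \<times> \<Omega>"
  using assms(3,4)
proof (induction rule: rtrancl_induct)
  case base thus ?case by simp
next
  case (step y z)
  hence "samb T1 y z \<or> samb T2 y z" by (simp add: jrel_def)
  thus ?case using cc_sub[OF c1] cc_sub[OF c2] by (auto simp: samb_def)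
qed

lemma join_sat:
  assumes "j \<in> join \<Omega> T1 T2" and "t \<in> T1 \<or> t \<in> T2" and "z \<in> t" and "z \<in> j"
  shows "t \<subseteq> j"
proof
  fix w assume w: "w \<in> t"
  obtain p where j: "j = (jrel T1 T2)\<^sup>* `` {p}" using assms(1) by (auto simp: join_def)
  have "(p,z) \<in> (jrel T1 T2)\<^sup>*" using assms(4) j by simp
  moreover have "(z,w) \<in> jrel T1 T2" using assms(2,3) w by (auto simp: jrel_def samb_def)
  ultimately have "(p,w) \<in> (jrel T1 T2)\<^sup>*" by (rule rtrancl_into_rtrancl)
  thus "w \<in> j" using j by simp
qed

lemma join_union:
  assumes cT: "coherent_config \<Omega> T" and j: "j \<in> join \<Omega> T1 T2" and TT: "T = T1 \<or> T = T2"
    and jsub: "j \<subseteq> \<Omega> \<times> \<Omega>"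
  shows "j = \<Union>{u\<in>T. u \<subseteq> j}"
proof
  show "j \<subseteq> \<Union>{u\<in>T. u \<subseteq> j}"
  proof
    fix z assume z: "z \<in> j"
    obtain u where u: "u \<in> T" "z \<in> u" using cc_cover[OF cT] z jsub by blast
    have "u \<subseteq> j" using join_sat[OF j _ u(2) z] u TT by blast
    thus "z \<in> \<Union>{u\<in>T. u \<subseteq> j}" using u by blast
  qed
qed blast

lemma join_cc:
  assumes c1: "coherent_config \<Omega> T1" and c2: "coherent_config \<Omega> T2"
  shows "coherent_config \<Omega> (join \<Omega> T1 T2)"
proof -
  let ?E = "(jrel T1 T2)\<^sup>*"
  let ?J = "join \<Omega> T1 T2"
  have fin: "finite \<Omega>" using cc_fin[OF c1] .
  have jsub: "\<And>j. j \<in> ?J \<Longrightarrow> j \<subseteq> \<Omega> \<times> \<Omega>"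
    using jrel_in[OF c1 c2] by (fastforce simp: join_def)
  have ne: "\<forall>s\<in>?J. s \<noteq> {}" by (auto simp: join_def)
  have disj: "\<forall>s\<in>?J. \<forall>t\<in>?J. s \<noteq> t \<longrightarrow> s \<inter> t = {}"
  proof (intro ballI impI)
    fix s t assume s: "s \<in> ?J" and t: "t \<in> ?J" and st: "s \<noteq> t"
    obtain p where p: "s = ?E `` {p}" using s by (auto simp: join_def)
    obtain q where q: "t = ?E `` {q}" using t by (auto simp: join_def)
    show "s \<inter> t = {}"
    proof (rule ccontr)
      assume "s \<inter> t \<noteq> {}"
      then obtain z where "z \<in> s" "z \<in> t" by blast
      hence "?E `` {z} = s" "?E `` {z} = t" using class_eq p q by metis+
      thus False using st by simp
    qed
  qed
  have un: "\<Union>?J = \<Omega> \<times> \<Omega>"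
  proof
    show "\<Union>?J \<subseteq> \<Omega> \<times> \<Omega>" using jsub by blast
    show "\<Omega> \<times> \<Omega> \<subseteq> \<Union>?J"
    proof
      fix z assume "z \<in> \<Omega> \<times> \<Omega>"
      hence "?E `` {z} \<in> ?J" by (auto simp: join_def)
      moreover have "z \<in> ?E `` {z}" by simp
      ultimately show "z \<in> \<Union>?J" by blast
    qed
  qed
  have diag: "\<forall>s\<in>?J. s \<subseteq> Id_on \<Omega> \<or> s \<inter> Id_on \<Omega> = {}"
  proof
    fix s assume s: "s \<in> ?J"
    obtain p where p: "s = ?E `` {p}" using s by (auto simp: join_def)
    have inv: "\<And>T q q'. coherent_config \<Omega> T \<Longrightarrow> samb T q q' \<Longrightarrow> (q \<in> Id_on \<Omega>) = (q' \<in> Id_on \<Omega>)"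
    proof -
      fix T q q' assume cT: "coherent_config \<Omega> T" and "samb T q q'"
      then obtain t where t: "t \<in> T" "q \<in> t" "q' \<in> t" by (auto simp: samb_def)
      have "t \<subseteq> Id_on \<Omega> \<or> t \<inter> Id_on \<Omega> = {}" using cc_parts(4)[OF cT] t(1) by blast
      thus "(q \<in> Id_on \<Omega>) = (q' \<in> Id_on \<Omega>)" using t by blast
    qed
    have "\<And>z. z \<in> s \<Longrightarrow> (p \<in> Id_on \<Omega>) = (z \<in> Id_on \<Omega>)"
    proof -
      fix z assume "z \<in> s"
      hence "(p,z) \<in> ?E" using p by simp
      thus "(p \<in> Id_on \<Omega>) = (z \<in> Id_on \<Omega>)"
        by (rule jrel_inv[where f = "\<lambda>q. q \<in> Id_on \<Omega>"]) (use inv[OF c1] inv[OF c2] in auto)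
    qed
    thus "s \<subseteq> Id_on \<Omega> \<or> s \<inter> Id_on \<Omega> = {}" by blast
  qed
  have conv: "\<forall>s\<in>?J. converse s \<in> ?J"
  proof
    fix s assume s: "s \<in> ?J"
    obtain p where p: "s = ?E `` {p}" and pO: "p \<in> \<Omega> \<times> \<Omega>" using s by (auto simp: join_def)
    have "converse s = ?E `` {prod.swap p}"
    proof
      show "converse s \<subseteq> ?E `` {prod.swap p}"
      proof
        fix z assume "z \<in> converse s"
        hence "(p, prod.swap z) \<in> ?E" using p by (cases z) auto
        hence "(prod.swap p, prod.swap (prod.swap z)) \<in> ?E" by (rule jrel_swap[OF c1 c2])
        thus "z \<in> ?E `` {prod.swap p}" by simp
      qed
      show "?E `` {prod.swap p} \<subseteq> converse s"
      proof
        fix z assume "z \<in> ?E `` {prod.swap p}"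
        hence "(prod.swap p, z) \<in> ?E" by simp
        hence "(prod.swap (prod.swap p), prod.swap z) \<in> ?E" by (rule jrel_swap[OF c1 c2])
        thus "z \<in> converse s" using p by (cases z) auto
      qed
    qed
    moreover have "prod.swap p \<in> \<Omega> \<times> \<Omega>" using pO by auto
    ultimately show "converse s \<in> ?J" unfolding join_def by (intro CollectI exI[of _ "prod.swap p"] conjI)
  qed
  have inter: "\<forall>r\<in>?J. \<forall>s\<in>?J. \<forall>t\<in>?J. \<forall>x\<in>t. \<forall>y\<in>t.
        card {\<gamma>. (fst x, \<gamma>) \<in> r \<and> (\<gamma>, snd x) \<in> s}
      = card {\<gamma>. (fst y, \<gamma>) \<in> r \<and> (\<gamma>, snd y) \<in> s}"
  proof (intro ballI)
    fix r s t x y assume r: "r \<in> ?J" and s: "s \<in> ?J" and t: "t \<in> ?J" and x: "x \<in> t" and y: "y \<in> t"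
    define f where "f = (\<lambda>z. card {\<gamma>. (fst z, \<gamma>) \<in> r \<and> (\<gamma>, snd z) \<in> s})"
    have inv: "\<And>T q q'. coherent_config \<Omega> T \<Longrightarrow> T = T1 \<or> T = T2 \<Longrightarrow> samb T q q' \<Longrightarrow> f q = f q'"
    proof -
      fix T q q' assume cT: "coherent_config \<Omega> T" and TT: "T = T1 \<or> T = T2" and "samb T q q'"
      then obtain u where u: "u \<in> T" "q \<in> u" "q' \<in> u" by (auto simp: samb_def)
      have "r = \<Union>{u\<in>T. u \<subseteq> r}" by (rule join_union[OF cT r TT jsub[OF r]])
      moreover have "s = \<Union>{u\<in>T. u \<subseteq> s}" by (rule join_union[OF cT s TT jsub[OF s]])
      moreover have "card {g. (fst q,g) \<in> \<Union>{u\<in>T. u \<subseteq> r} \<and> (g,snd q) \<in> \<Union>{u\<in>T. u \<subseteq> s}}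
          = card {g. (fst q',g) \<in> \<Union>{u\<in>T. u \<subseteq> r} \<and> (g,snd q') \<in> \<Union>{u\<in>T. u \<subseteq> s}}"
        by (rule cc_union_inter[OF cT _ _ u(1)]) (use u in auto)
      ultimately show "f q = f q'" unfolding f_def by simp
    qed
    obtain p where p: "t = ?E `` {p}" using t by (auto simp: join_def)
    have px: "(p,x) \<in> ?E" and py: "(p,y) \<in> ?E" using x y p by auto
    have "f p = f x" by (rule jrel_inv[OF px]) (use inv[OF c1] inv[OF c2] in auto)
    moreover have "f p = f y" by (rule jrel_inv[OF py]) (use inv[OF c1] inv[OF c2] in auto)
    ultimately show "f x = f y" by simp
  qed
  show ?thesis unfolding coherent_config_def using fin ne disj un diag conv inter by blast
qed



lemma join_sub: "coherent_config \<Omega> T1 \<Longrightarrow> coherent_config \<Omega> T2 \<Longrightarrow> j \<in> join \<Omega> T1 T2 \<Longrightarrow> j \<subseteq> \<Omega> \<times> \<Omega>"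
  using cc_sub[OF join_cc] by blast

lemma join_mem: "p \<in> \<Omega> \<times> \<Omega> \<Longrightarrow> (jrel T1 T2)\<^sup>* `` {p} \<in> join \<Omega> T1 T2"
  unfolding join_def by blast

lemma join_fission_S:
  assumes cS: "coherent_config \<Omega> S" and f1: "fission \<Omega> S T1" and f2: "fission \<Omega> S T2"
  shows "fission \<Omega> S (join \<Omega> T1 T2)"
proof -
  have c1: "coherent_config \<Omega> T1" using f1 by (simp add: fission_def)
  have c2: "coherent_config \<Omega> T2" using f2 by (simp add: fission_def)
  have "\<forall>s\<in>S. \<exists>U\<subseteq>join \<Omega> T1 T2. s = \<Union>U"
  proof
    fix s assume s: "s \<in> S"
    have inv: "\<And>T q q'. fission \<Omega> S T \<Longrightarrow> samb T q q' \<Longrightarrow> (q \<in> s) = (q' \<in> s)"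
    proof -
      fix T q q' assume fT: "fission \<Omega> S T" and "samb T q q'"
      then obtain t where t: "t \<in> T" "q \<in> t" "q' \<in> t" by (auto simp: samb_def)
      show "(q \<in> s) = (q' \<in> s)"
        using refine[OF fT cS t(1) t(2) s] refine[OF fT cS t(1) t(3) s] t by blast
    qed
    have e: "s = \<Union>{j \<in> join \<Omega> T1 T2. j \<subseteq> s}"
    proof
      show "s \<subseteq> \<Union>{j \<in> join \<Omega> T1 T2. j \<subseteq> s}"
      proof
        fix z assume z: "z \<in> s"
        have zO: "z \<in> \<Omega> \<times> \<Omega>" using cc_sub[OF cS s] z by blast
        have sub: "(jrel T1 T2)\<^sup>* `` {z} \<subseteq> s"
        proof
          fix w assume "w \<in> (jrel T1 T2)\<^sup>* `` {z}"
          hence zw: "(z,w) \<in> (jrel T1 T2)\<^sup>*" by simp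
          have "(z \<in> s) = (w \<in> s)"
            by (rule jrel_inv[OF zw]) (use inv[OF f1] inv[OF f2] in auto)
          thus "w \<in> s" using z by simp
        qed
        have zin: "z \<in> (jrel T1 T2)\<^sup>* `` {z}" by simp
        have jm: "(jrel T1 T2)\<^sup>* `` {z} \<in> join \<Omega> T1 T2" by (rule join_mem[OF zO])
        have "(jrel T1 T2)\<^sup>* `` {z} \<in> {j \<in> join \<Omega> T1 T2. j \<subseteq> s}" by (simp add: jm sub)
        thus "z \<in> \<Union>{j \<in> join \<Omega> T1 T2. j \<subseteq> s}" using zin by (rule UnionI)
      qed
    qed blast
    show "\<exists>U\<subseteq>join \<Omega> T1 T2. s = \<Union>U" by (rule exI[of _ "{j \<in> join \<Omega> T1 T2. j \<subseteq> s}"], rule conjI[OF _ e]) blast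
  qed
  thus ?thesis unfolding fission_def using join_cc[OF c1 c2] by blast
qed

lemma join_fiber:
  assumes c1: "coherent_config \<Omega> T1" and c2: "coherent_config \<Omega> T2"
    and b1: "{(b,b)} \<in> T1" and b2: "{(b,b)} \<in> T2"
  shows "{(b,b)} \<in> join \<Omega> T1 T2"
proof -
  have bO: "(b,b) \<in> \<Omega> \<times> \<Omega>" using cc_sub[OF c1 b1] by blast
  have inv: "\<And>T q q'. coherent_config \<Omega> T \<Longrightarrow> {(b,b)} \<in> T \<Longrightarrow> samb T q q' \<Longrightarrow> (q = (b,b)) = (q' = (b,b))"
  proof -
    fix T q q' assume cT: "coherent_config \<Omega> T" and bT: "{(b,b)} \<in> T" and "samb T q q'"
    then obtain t where t: "t \<in> T" "q \<in> t" "q' \<in> t" by (auto simp: samb_def)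
    show "(q = (b,b)) = (q' = (b,b))"
    proof
      assume "q = (b,b)"
      hence "t = {(b,b)}" using cc_disj[OF cT t(1) bT t(2)] by simp
      thus "q' = (b,b)" using t by simp
    next
      assume "q' = (b,b)"
      hence "t = {(b,b)}" using cc_disj[OF cT t(1) bT t(3)] by simp
      thus "q = (b,b)" using t by simp
    qed
  qed
  have eq: "(jrel T1 T2)\<^sup>* `` {(b,b)} = {(b,b)}"
  proof
    show "(jrel T1 T2)\<^sup>* `` {(b,b)} \<subseteq> {(b,b)}"
    proof
      fix w assume "w \<in> (jrel T1 T2)\<^sup>* `` {(b,b)}"
      hence zw: "((b,b),w) \<in> (jrel T1 T2)\<^sup>*" by simp
      have "((b,b) = (b,b)) = (w = (b,b))"
        by (rule jrel_inv[OF zw]) (use inv[OF c1 b1] inv[OF c2 b2] in auto)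
      thus "w \<in> {(b,b)}" by simp
    qed
  qed simp
  have "(jrel T1 T2)\<^sup>* `` {(b,b)} \<in> join \<Omega> T1 T2" by (rule join_mem[OF bO])
  thus ?thesis unfolding eq .
qed

lemma join_fission_T:
  assumes c1: "coherent_config \<Omega> T1" and c2: "coherent_config \<Omega> T2" and TT: "T = T1 \<or> T = T2"
  shows "fission \<Omega> (join \<Omega> T1 T2) T"
proof -
  have cT: "coherent_config \<Omega> T" using TT c1 c2 by blast
  have "\<forall>j\<in>join \<Omega> T1 T2. \<exists>U\<subseteq>T. j = \<Union>U"
  proof
    fix j assume j: "j \<in> join \<Omega> T1 T2"
    have e: "j = \<Union>{u\<in>T. u \<subseteq> j}" by (rule join_union[OF cT j TT join_sub[OF c1 c2 j]])
    show "\<exists>U\<subseteq>T. j = \<Union>U" by (rule exI[of _ "{u\<in>T. u \<subseteq> j}"], rule conjI[OF _ e]) blast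
  qed
  thus ?thesis unfolding fission_def using cT by blast
qed

lemma complete_cc:
  assumes fin: "finite \<Omega>"
  shows "coherent_config \<Omega> {{p} | p. p \<in> \<Omega> \<times> \<Omega>}"
proof -
  let ?C = "{{p} | p. p \<in> \<Omega> \<times> \<Omega>}"
  have inter: "\<forall>r\<in>?C. \<forall>s\<in>?C. \<forall>t\<in>?C. \<forall>x\<in>t. \<forall>y\<in>t.
        card {\<gamma>. (fst x, \<gamma>) \<in> r \<and> (\<gamma>, snd x) \<in> s}
      = card {\<gamma>. (fst y, \<gamma>) \<in> r \<and> (\<gamma>, snd y) \<in> s}"
  proof (intro ballI)
    fix r s t x y assume "t \<in> ?C" "x \<in> t" "y \<in> t"
    hence "x = y" by auto
    thus "card {\<gamma>. (fst x, \<gamma>) \<in> r \<and> (\<gamma>, snd x) \<in> s} = card {\<gamma>. (fst y, \<gamma>) \<in> r \<and> (\<gamma>, snd y) \<in> s}" by simp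
  qed
  have conv: "\<forall>s\<in>?C. converse s \<in> ?C"
  proof
    fix s assume "s \<in> ?C"
    then obtain a b where s: "s = {(a,b)}" "a \<in> \<Omega>" "b \<in> \<Omega>" by blast
    hence "converse s = {(b,a)}" by auto
    thus "converse s \<in> ?C" using s by blast
  qed
  have diag: "\<forall>s\<in>?C. s \<subseteq> Id_on \<Omega> \<or> s \<inter> Id_on \<Omega> = {}" by blast
  have un: "\<Union>?C = \<Omega> \<times> \<Omega>" by blast
  have disj: "\<forall>s\<in>?C. \<forall>t\<in>?C. s \<noteq> t \<longrightarrow> s \<inter> t = {}" by blast
  have ne: "\<forall>s\<in>?C. s \<noteq> {}" by blast
  show ?thesis unfolding coherent_config_def using fin ne disj un diag conv inter by blast
qed

lemma exists_spf:
  assumes cS: "coherent_config \<Omega> S" and B: "B \<subseteq> \<Omega>"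
  shows "\<exists>T. smallest_point_fission \<Omega> S B T"
proof -
  define F where "F = {T. fission \<Omega> S T \<and> (\<forall>\<beta>\<in>B. {(\<beta>, \<beta>)} \<in> T)}"
  have fin: "finite \<Omega>" using cc_fin[OF cS] .
  let ?C = "{{p} | p. p \<in> \<Omega> \<times> \<Omega>}"
  have "fission \<Omega> S ?C"
  proof -
    have "\<forall>s\<in>S. \<exists>U\<subseteq>?C. s = \<Union>U"
    proof
      fix s assume s: "s \<in> S"
      have e: "s = \<Union>{{p} | p. p \<in> s}" by blast
      have sb: "{{p} | p. p \<in> s} \<subseteq> ?C" using cc_sub[OF cS s] by blast
      show "\<exists>U\<subseteq>?C. s = \<Union>U" by (rule exI[of _ "{{p} | p. p \<in> s}"], rule conjI[OF sb e])
    qed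
    thus ?thesis unfolding fission_def using complete_cc[OF fin] by blast
  qed
  moreover have "\<forall>\<beta>\<in>B. {(\<beta>, \<beta>)} \<in> ?C" using B by blast
  ultimately have CF: "?C \<in> F" by (simp add: F_def)
  obtain T0 where T0: "T0 \<in> F" and min: "\<And>T. T \<in> F \<Longrightarrow> card T0 \<le> card T"
    using ex_has_least_nat[of "\<lambda>T. T \<in> F" ?C card, OF CF] by blast
  have f0: "fission \<Omega> S T0" and b0: "\<forall>\<beta>\<in>B. {(\<beta>, \<beta>)} \<in> T0" using T0 by (auto simp: F_def)
  have c0: "coherent_config \<Omega> T0" using f0 by (simp add: fission_def)
  have "\<forall>T'. fission \<Omega> S T' \<and> (\<forall>\<beta>\<in>B. {(\<beta>, \<beta>)} \<in> T') \<longrightarrow> fission \<Omega> T0 T'"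
  proof (intro allI impI)
    fix T' assume T': "fission \<Omega> S T' \<and> (\<forall>\<beta>\<in>B. {(\<beta>, \<beta>)} \<in> T')"
    have c': "coherent_config \<Omega> T'" using T' by (simp add: fission_def)
    let ?J = "join \<Omega> T0 T'"
    let ?E = "(jrel T0 T')\<^sup>*"
    have cJ: "coherent_config \<Omega> ?J" by (rule join_cc[OF c0 c'])
    have JF: "?J \<in> F" unfolding F_def
      using join_fission_S[OF cS f0] T' join_fiber[OF c0 c'] b0 by blast
    define h where "h = (\<lambda>u. ?E `` {SOME z. z \<in> u})"
    have hu: "\<And>u. u \<in> T0 \<Longrightarrow> h u \<in> ?J \<and> u \<subseteq> h u"
    proof -
      fix u assume u: "u \<in> T0"
      have "u \<noteq> {}" using cc_parts(1)[OF c0] u by blast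
      hence z: "(SOME z. z \<in> u) \<in> u" by (simp add: some_in_eq)
      hence zO: "(SOME z. z \<in> u) \<in> \<Omega> \<times> \<Omega>" using cc_sub[OF c0 u] by blast
      have hJ: "h u \<in> ?J" unfolding h_def by (rule join_mem[OF zO])
      have "(SOME z. z \<in> u) \<in> h u" unfolding h_def by simp
      hence "u \<subseteq> h u" using join_sat[OF hJ _ z] u by blast
      thus "h u \<in> ?J \<and> u \<subseteq> h u" using hJ by blast
    qed
    have img: "h ` T0 = ?J"
    proof
      show "h ` T0 \<subseteq> ?J" using hu by blast
      show "?J \<subseteq> h ` T0"
      proof
        fix j assume j: "j \<in> ?J"
        then obtain p where p: "j = ?E `` {p}" "p \<in> \<Omega> \<times> \<Omega>" by (auto simp: join_def)
        obtain u where u: "u \<in> T0" "p \<in> u" using cc_cover[OF c0 p(2)] by blast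
        have "p \<in> h u" using hu[OF u(1)] u(2) by blast
        hence "h u = j" using cc_disj[OF cJ _ j, of "h u" p] hu[OF u(1)] p by simp
        thus "j \<in> h ` T0" using u by blast
      qed
    qed
    have finT0: "finite T0" using cc_finT[OF c0] .
    have "card ?J \<le> card T0" using card_image_le[OF finT0, of h] img by simp
    moreover have "card T0 \<le> card ?J" using min[OF JF] .
    ultimately have "card (h ` T0) = card T0" using img by simp
    hence inj: "inj_on h T0" by (rule eq_card_imp_inj_on[OF finT0])
    have hid: "\<And>u. u \<in> T0 \<Longrightarrow> h u = u"
    proof -
      fix u assume u: "u \<in> T0"
      show "h u = u"
      proof
        show "u \<subseteq> h u" using hu[OF u] by blast
        show "h u \<subseteq> u"
        proof
          fix w assume w: "w \<in> h u"
          have wO: "w \<in> \<Omega> \<times> \<Omega>" using cc_sub[OF cJ] hu[OF u] w by blast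
          obtain u' where u': "u' \<in> T0" "w \<in> u'" using cc_cover[OF c0 wO] by blast
          have "w \<in> h u'" using hu[OF u'(1)] u'(2) by blast
          hence "h u' = h u" using cc_disj[OF cJ _ _ _ w] hu[OF u'(1)] hu[OF u] by blast
          hence "u' = u" using inj u u' by (simp add: inj_on_def)
          thus "w \<in> u" using u' by simp
        qed
      qed
    qed
    have "?J = T0"
    proof -
      have "h ` T0 = T0" using hid by simp
      thus ?thesis using img by simp
    qed
    moreover have "fission \<Omega> ?J T'" by (rule join_fission_T[OF c0 c']) simp
    ultimately show "fission \<Omega> T0 T'" by simp
  qed
  thus ?thesis unfolding smallest_point_fission_def using f0 b0 by blast
qed



lemma complete_of_good:
  assumes c1: "coherent_config \<Omega> T1" and f12: "fission \<Omega> T1 T2" and g: "\<gamma> \<in> \<Omega>"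
    and good: "\<forall>t\<in>T1. card {d. (\<gamma>,d) \<in> t} \<le> 1" and fg: "{(\<gamma>,\<gamma>)} \<in> T2"
  shows "complete_config T2"
proof -
  have c2: "coherent_config \<Omega> T2" using f12 by (simp add: fission_def)
  have fin: "finite \<Omega>" using cc_fin[OF c1] .
  have row: "\<And>x. x \<in> \<Omega> \<Longrightarrow> {(\<gamma>,x)} \<in> T2"
  proof -
    fix x assume x: "x \<in> \<Omega>"
    obtain w2 where w2: "w2 \<in> T2" "(\<gamma>,x) \<in> w2" using cc_cover[OF c2, of "(\<gamma>,x)"] g x by blast
    obtain w1 where w1: "w1 \<in> T1" "(\<gamma>,x) \<in> w1" using cc_cover[OF c1, of "(\<gamma>,x)"] g x by blast
    have sub: "w2 \<subseteq> w1" by (rule refine[OF f12 c1 w2 w1])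
    have finw: "finite {d. (\<gamma>,d) \<in> w1}"
      by (rule finite_subset[of _ \<Omega>]) (use cc_sub[OF c1 w1(1)] fin in auto)
    have cw: "card {d. (\<gamma>,d) \<in> w1} \<le> Suc 0" using good w1(1) by simp
    have "w2 = {(\<gamma>,x)}"
    proof
      show "w2 \<subseteq> {(\<gamma>,x)}"
      proof
        fix z assume z: "z \<in> w2"
        obtain a b where ab: "z = (a,b)" by (cases z)
        have a: "a = \<gamma>" by (rule fiber_row[OF c2 fg w2(1) w2(2)]) (use z ab in simp)
        hence "(\<gamma>,b) \<in> w1" using sub z ab by blast
        hence "b = x" using card_le_Suc0_iff_eq[OF finw] cw w1(2) by blast
        thus "z \<in> {(\<gamma>,x)}" using a ab by simp
      qed
    qed (use w2 in simp)
    thus "{(\<gamma>,x)} \<in> T2" using w2 by simp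
  qed
  show ?thesis unfolding complete_config_def
  proof
    fix t assume t: "t \<in> T2"
    obtain a b where ab: "(a,b) \<in> t" using cc_parts(1)[OF c2] t by fast
    have abO: "a \<in> \<Omega>" "b \<in> \<Omega>" using cc_sub[OF c2 t] ab by auto
    have "converse {(\<gamma>,a)} = {(a,\<gamma>)}" by auto
    hence r: "{(a,\<gamma>)} \<in> T2" using cc_conv[OF c2 row[OF abO(1)]] by simp
    have s: "{(\<gamma>,b)} \<in> T2" using row[OF abO(2)] .
    have "t = {(a,b)}"
    proof
      show "t \<subseteq> {(a,b)}"
      proof
        fix z assume z: "z \<in> t"
        obtain a' b' where z': "z = (a',b')" by (cases z)
        have e: "card {g. (a,g) \<in> {(a,\<gamma>)} \<and> (g,b) \<in> {(\<gamma>,b)}} = card {g. (a',g) \<in> {(a,\<gamma>)} \<and> (g,b') \<in> {(\<gamma>,b)}}"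
          by (rule cc_inter[OF c2 r s t ab]) (use z z' in simp)
        have e1: "{g. (a,g) \<in> {(a,\<gamma>)} \<and> (g,b) \<in> {(\<gamma>,b)}} = {\<gamma>}" by auto
        show "z \<in> {(a,b)}"
        proof (rule ccontr)
          assume "z \<notin> {(a,b)}"
          hence "{g. (a',g) \<in> {(a,\<gamma>)} \<and> (g,b') \<in> {(\<gamma>,b)}} = {}" using z' by auto
          with e e1 have "card {\<gamma>} = card ({}::'a set)" by simp
          thus False by simp
        qed
      qed
    qed (use ab in simp)
    thus "card t = 1" by simp
  qed
qed

theorem theorem8p1:
  fixes \<Omega> :: "'a set" and S :: "('a \<times> 'a) set set"
  assumes "scheme \<Omega> S"
    and "4 * indist_number \<Omega> S * (n_max \<Omega> S - 1) < card \<Omega>"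
  shows "(\<forall>\<alpha>\<in>\<Omega>. (\<exists>T. smallest_point_fission \<Omega> S {\<alpha>} T) \<and>
            (\<forall>T. smallest_point_fission \<Omega> S {\<alpha>} T \<longrightarrow> one_regular \<Omega> T))
         \<and> base_number \<Omega> S \<le> 2"
proof -
  have cS: "coherent_config \<Omega> S" using assms(1) by (simp add: scheme_def)
  have part1: "\<forall>\<alpha>\<in>\<Omega>. (\<exists>T. smallest_point_fission \<Omega> S {\<alpha>} T) \<and>
            (\<forall>T. smallest_point_fission \<Omega> S {\<alpha>} T \<longrightarrow> one_regular \<Omega> T)"
  proof
    fix \<alpha> assume a: "\<alpha> \<in> \<Omega>"
    have "\<exists>T. smallest_point_fission \<Omega> S {\<alpha>} T" by (rule exists_spf[OF cS]) (use a in simp)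
    moreover have "\<forall>T. smallest_point_fission \<Omega> S {\<alpha>} T \<longrightarrow> one_regular \<Omega> T"
    proof (intro allI impI)
      fix T assume T: "smallest_point_fission \<Omega> S {\<alpha>} T"
      have "fission \<Omega> S T" "{(\<alpha>,\<alpha>)} \<in> T" using T by (auto simp: smallest_point_fission_def)
      from good_point[OF assms(1) this a assms(2)] show "one_regular \<Omega> T"
        by (simp add: one_regular_def)
    qed
    ultimately show "(\<exists>T. smallest_point_fission \<Omega> S {\<alpha>} T) \<and>
            (\<forall>T. smallest_point_fission \<Omega> S {\<alpha>} T \<longrightarrow> one_regular \<Omega> T)" by blast
  qed
  have "Id_on \<Omega> \<in> S" using assms(1) by (simp add: scheme_def)
  hence "Id_on \<Omega> \<noteq> {}" using cc_parts(1)[OF cS] by blast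
  then obtain \<alpha> where a: "\<alpha> \<in> \<Omega>" by auto
  obtain T1 where T1: "smallest_point_fission \<Omega> S {\<alpha>} T1" using exists_spf[OF cS, of "{\<alpha>}"] a by auto
  have f1: "fission \<Omega> S T1" and fa: "{(\<alpha>,\<alpha>)} \<in> T1" using T1 by (auto simp: smallest_point_fission_def)
  have c1: "coherent_config \<Omega> T1" using f1 by (simp add: fission_def)
  obtain \<gamma> where g: "\<gamma> \<in> \<Omega>" and good: "\<forall>t\<in>T1. card {d. (\<gamma>,d) \<in> t} \<le> 1"
    using good_point[OF assms(1) f1 fa a assms(2)] by blast
  obtain T2 where T2: "smallest_point_fission \<Omega> S {\<alpha>,\<gamma>} T2" using exists_spf[OF cS, of "{\<alpha>,\<gamma>}"] a g by auto
  have f2: "fission \<Omega> S T2" and fb: "\<forall>\<beta>\<in>{\<alpha>,\<gamma>}. {(\<beta>,\<beta>)} \<in> T2"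
    using T2 by (auto simp: smallest_point_fission_def)
  have f12: "fission \<Omega> T1 T2" using T1 f2 fb by (auto simp: smallest_point_fission_def)
  have "complete_config T2" by (rule complete_of_good[OF c1 f12 g good]) (use fb in simp)
  hence base: "is_base \<Omega> S {\<alpha>,\<gamma>}" unfolding is_base_def using T2 a g by blast
  have "base_number \<Omega> S \<le> card {\<alpha>,\<gamma>}" unfolding base_number_def
    by (rule Least_le) (use base in blast)
  also have "\<dots> \<le> 2" by (simp add: card_insert_if)
  finally show ?thesis using part1 by blast
qed


end
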